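(* The inverse hull $IH(C)$ of a Garside monoid $C$ is a bisimple $F$-inverse monoid.
   Context: A Garside monoid is a cancellative monoid $C$ whose only unit is the identity, such that any two elements have a least common left multiple, a least common right multiple, a greatest common left divisor and a greatest common right divisor (i.e. $C$ is a lattice under both left and right divisibility), and which satisfies the standard finiteness conditions (every element has a bound on the lengths of its factorizations into non-identity elements, and there is a Garside element whose left and right divisors coincide, are finite in number and generate $C$). For a right cancellative monoid $C$ and $a\in C$, $\rho_a:C\to C$, $x\mapsto xa$, is a partial bijection of $C$; $IH(C)$ is the inverse submonoid of the symmetric inverse monoid on $C$ generated by all $\rho_a$. An inverse monoid is bisimple if all its elements are $\mathscr{D}$-related, and $F$-inverse if every element lies beneath a unique maximal element in the natural partial order ($a\le b$ iff $a=eb$ for an idempotent $e$). *)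

theory Defs
  imports "HOL-Algebra.Group"
begin

definition mprod :: "('a, 'b) monoid_scheme \<Rightarrow> 'a list \<Rightarrow> 'a" where
  "mprod M xs = foldr (\<lambda>x y. x \<otimes>\<^bsub>M\<^esub> y) xs \<one>\<^bsub>M\<^esub>"

definition ldiv :: "('a, 'b) monoid_scheme \<Rightarrow> 'a \<Rightarrow> 'a \<Rightarrow> bool" where
  "ldiv M a b \<longleftrightarrow> (\<exists>c\<in>carrier M. a \<otimes>\<^bsub>M\<^esub> c = b)"

definition rdiv :: "('a, 'b) monoid_scheme \<Rightarrow> 'a \<Rightarrow> 'a \<Rightarrow> bool" where
  "rdiv M a b \<longleftrightarrow> (\<exists>c\<in>carrier M. c \<otimes>\<^bsub>M\<^esub> a = b)"

definition div_lattice :: "'a set \<Rightarrow> ('a \<Rightarrow> 'a \<Rightarrow> bool) \<Rightarrow> bool" where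
  "div_lattice C r \<longleftrightarrow>
     (\<forall>a\<in>C. \<forall>b\<in>C.
        (\<exists>m\<in>C. r a m \<and> r b m \<and> (\<forall>x\<in>C. r a x \<and> r b x \<longrightarrow> r m x)) \<and>
        (\<exists>d\<in>C. r d a \<and> r d b \<and> (\<forall>x\<in>C. r x a \<and> r x b \<longrightarrow> r x d)))"

definition garside_monoid :: "('a, 'b) monoid_scheme \<Rightarrow> bool" where
  "garside_monoid M \<longleftrightarrow>
     monoid M \<and>
     \<comment> \<open>cancellative\<close>
     (\<forall>a\<in>carrier M. \<forall>b\<in>carrier M. \<forall>c\<in>carrier M.
        a \<otimes>\<^bsub>M\<^esub> b = a \<otimes>\<^bsub>M\<^esub> c \<longrightarrow> b = c) \<and>
     (\<forall>a\<in>carrier M. \<forall>b\<in>carrier M. \<forall>c\<in>carrier M.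
        b \<otimes>\<^bsub>M\<^esub> a = c \<otimes>\<^bsub>M\<^esub> a \<longrightarrow> b = c) \<and>
     \<comment> \<open>the only unit is the identity\<close>
     (\<forall>a\<in>carrier M. \<forall>b\<in>carrier M.
        a \<otimes>\<^bsub>M\<^esub> b = \<one>\<^bsub>M\<^esub> \<longrightarrow> a = \<one>\<^bsub>M\<^esub>) \<and>
     \<comment> \<open>lattice for left and for right divisibility\<close>
     div_lattice (carrier M) (ldiv M) \<and>
     div_lattice (carrier M) (rdiv M) \<and>
     \<comment> \<open>bounded lengths of factorizations into non-identity elements\<close>
     (\<forall>a\<in>carrier M. \<exists>N::nat. \<forall>xs.
        set xs \<subseteq> carrier M - {\<one>\<^bsub>M\<^esub>} \<and> mprod M xs = a \<longrightarrow> length xs \<le> N) \<and>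
     \<comment> \<open>existence of a Garside element\<close>
     (\<exists>\<Delta>\<in>carrier M.
        {x\<in>carrier M. ldiv M x \<Delta>} = {x\<in>carrier M. rdiv M x \<Delta>} \<and>
        finite {x\<in>carrier M. ldiv M x \<Delta>} \<and>
        (\<forall>a\<in>carrier M. \<exists>xs. set xs \<subseteq> {x\<in>carrier M. ldiv M x \<Delta>} \<and> mprod M xs = a))"

text \<open>Partial bijections of the carrier are partial maps. The product f g in the
  symmetric inverse monoid is "first f, then g", so that rho a rho b = rho (a b).\<close>

definition idmap :: "('a, 'b) monoid_scheme \<Rightarrow> 'a \<rightharpoonup> 'a" where
  "idmap M = (\<lambda>x. if x \<in> carrier M then Some x else None)"

definition rho :: "('a, 'b) monoid_scheme \<Rightarrow> 'a \<Rightarrow> 'a \<rightharpoonup> 'a" where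
  "rho M a = (\<lambda>x. if x \<in> carrier M then Some (x \<otimes>\<^bsub>M\<^esub> a) else None)"

definition pinv :: "('a \<rightharpoonup> 'a) \<Rightarrow> 'a \<rightharpoonup> 'a" where
  "pinv f = (\<lambda>y. if y \<in> ran f then Some (THE x. f x = Some y) else None)"

inductive_set IH_set :: "('a, 'b) monoid_scheme \<Rightarrow> ('a \<rightharpoonup> 'a) set" for M where
  IH_one: "idmap M \<in> IH_set M"
| IH_gen: "a \<in> carrier M \<Longrightarrow> rho M a \<in> IH_set M"
| IH_inv: "f \<in> IH_set M \<Longrightarrow> pinv f \<in> IH_set M"
| IH_comp: "f \<in> IH_set M \<Longrightarrow> g \<in> IH_set M \<Longrightarrow> (g \<circ>\<^sub>m f) \<in> IH_set M"

definition IH :: "('a, 'b) monoid_scheme \<Rightarrow> ('a \<rightharpoonup> 'a) monoid" where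
  "IH M = \<lparr>carrier = IH_set M, mult = (\<lambda>f g. g \<circ>\<^sub>m f), one = idmap M\<rparr>"

definition inverse_monoid :: "('a, 'b) monoid_scheme \<Rightarrow> bool" where
  "inverse_monoid S \<longleftrightarrow> monoid S \<and>
     (\<forall>a\<in>carrier S. \<exists>!b. b \<in> carrier S \<and>
        a \<otimes>\<^bsub>S\<^esub> b \<otimes>\<^bsub>S\<^esub> a = a \<and> b \<otimes>\<^bsub>S\<^esub> a \<otimes>\<^bsub>S\<^esub> b = b)"

definition green_L :: "('a, 'b) monoid_scheme \<Rightarrow> 'a \<Rightarrow> 'a \<Rightarrow> bool" where
  "green_L S a b \<longleftrightarrow> (\<lambda>x. x \<otimes>\<^bsub>S\<^esub> a) ` carrier S = (\<lambda>x. x \<otimes>\<^bsub>S\<^esub> b) ` carrier S"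

definition green_R :: "('a, 'b) monoid_scheme \<Rightarrow> 'a \<Rightarrow> 'a \<Rightarrow> bool" where
  "green_R S a b \<longleftrightarrow> (\<lambda>x. a \<otimes>\<^bsub>S\<^esub> x) ` carrier S = (\<lambda>x. b \<otimes>\<^bsub>S\<^esub> x) ` carrier S"

definition green_D :: "('a, 'b) monoid_scheme \<Rightarrow> 'a \<Rightarrow> 'a \<Rightarrow> bool" where
  "green_D S a b \<longleftrightarrow> (\<exists>c\<in>carrier S. green_L S a c \<and> green_R S c b)"

definition bisimple :: "('a, 'b) monoid_scheme \<Rightarrow> bool" where
  "bisimple S \<longleftrightarrow> inverse_monoid S \<and> (\<forall>a\<in>carrier S. \<forall>b\<in>carrier S. green_D S a b)"

definition nat_le :: "('a, 'b) monoid_scheme \<Rightarrow> 'a \<Rightarrow> 'a \<Rightarrow> bool" where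
  "nat_le S a b \<longleftrightarrow> (\<exists>e\<in>carrier S. e \<otimes>\<^bsub>S\<^esub> e = e \<and> a = e \<otimes>\<^bsub>S\<^esub> b)"

definition nat_maximal :: "('a, 'b) monoid_scheme \<Rightarrow> 'a \<Rightarrow> bool" where
  "nat_maximal S m \<longleftrightarrow> m \<in> carrier S \<and> (\<forall>x\<in>carrier S. nat_le S m x \<longrightarrow> x = m)"

definition F_inverse :: "('a, 'b) monoid_scheme \<Rightarrow> bool" where
  "F_inverse S \<longleftrightarrow> inverse_monoid S \<and>
     (\<forall>a\<in>carrier S. \<exists>!m. nat_maximal S m \<and> nat_le S a m)"

end

theory Submission
  imports Defs
begin

lemma mcomp_assoc: "(f \<circ>\<^sub>m g) \<circ>\<^sub>m h = f \<circ>\<^sub>m (g \<circ>\<^sub>m h)"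
  by (rule ext) (simp add: map_comp_def split: option.split)

lemma map_eqI: "(\<And>x z. f x = Some z \<longleftrightarrow> g x = Some z) \<Longrightarrow> f = g"
proof (rule ext)
  fix x assume h: "\<And>x z. f x = Some z \<longleftrightarrow> g x = Some z"
  show "f x = g x"
  proof (cases "f x")
    case None
    then show ?thesis using h[of x] by (cases "g x") auto
  next
    case (Some z) then show ?thesis using h[of x z] by auto
  qed
qed

definition pinj :: "('a \<rightharpoonup> 'a) \<Rightarrow> bool" where
  "pinj f \<longleftrightarrow> (\<forall>x x' z. f x = Some z \<longrightarrow> f x' = Some z \<longrightarrow> x = x')"

lemma pinv_Some:
  assumes "pinj f"
  shows "pinv f y = Some z \<longleftrightarrow> f z = Some y"
proof
  assume h: "pinv f y = Some z"
  then have r: "y \<in> ran f" unfolding pinv_def by (auto split: if_splits)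
  then obtain x where x: "f x = Some y" unfolding ran_def by auto
  have "(THE x. f x = Some y) = x"
    using x assms unfolding pinj_def by blast
  then show "f z = Some y" using h r x unfolding pinv_def by auto
next
  assume h: "f z = Some y"
  then have r: "y \<in> ran f" unfolding ran_def by auto
  have "(THE x. f x = Some y) = z"
    using h assms unfolding pinj_def by blast
  then show "pinv f y = Some z" using r unfolding pinv_def by auto
qed

lemma inv_unique_char:
  assumes "pinj f" "pinj g" "f \<circ>\<^sub>m (g \<circ>\<^sub>m f) = f" "g \<circ>\<^sub>m (f \<circ>\<^sub>m g) = g"
  shows "g y = Some z \<longleftrightarrow> f z = Some y"
proof
  assume h: "g y = Some z"
  have "(g \<circ>\<^sub>m (f \<circ>\<^sub>m g)) y = Some z" using assms(4) h by simp
  then obtain w where w: "f z = Some w" "g w = Some z" using h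
    by (auto simp: map_comp_Some_iff)
  then have "w = y" using h assms(2) unfolding pinj_def by blast
  then show "f z = Some y" using w by simp
next
  assume h: "f z = Some y"
  have "(f \<circ>\<^sub>m (g \<circ>\<^sub>m f)) z = Some y" using assms(3) h by simp
  then obtain w where w: "g y = Some w" "f w = Some y" using h
    by (auto simp: map_comp_Some_iff)
  then have "w = z" using h assms(1) unfolding pinj_def by blast
  then show "g y = Some z" using w by simp
qed

definition br :: "('a, 'b) monoid_scheme \<Rightarrow> 'a \<Rightarrow> 'a \<Rightarrow> 'a \<rightharpoonup> 'a" where
  "br M a b = rho M b \<circ>\<^sub>m pinv (rho M a)"

locale garside =
  fixes M (structure)
  assumes G: "garside_monoid M"

sublocale garside \<subseteq> monoid M
  using G unfolding garside_monoid_def by auto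

context garside
begin

lemma rc: "a \<in> carrier M \<Longrightarrow> b \<in> carrier M \<Longrightarrow> c \<in> carrier M \<Longrightarrow> b \<otimes> a = c \<otimes> a \<Longrightarrow> b = c"
proof -
  have "\<forall>a\<in>carrier M. \<forall>b\<in>carrier M. \<forall>c\<in>carrier M.
        b \<otimes> a = c \<otimes> a \<longrightarrow> b = c" using G unfolding garside_monoid_def by (elim conjE)
  then show "a \<in> carrier M \<Longrightarrow> b \<in> carrier M \<Longrightarrow> c \<in> carrier M \<Longrightarrow> b \<otimes> a = c \<otimes> a \<Longrightarrow> b = c" by blast
qed

lemma lc: "a \<in> carrier M \<Longrightarrow> b \<in> carrier M \<Longrightarrow> c \<in> carrier M \<Longrightarrow> a \<otimes> b = a \<otimes> c \<Longrightarrow> b = c"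
proof -
  have "\<forall>a\<in>carrier M. \<forall>b\<in>carrier M. \<forall>c\<in>carrier M.
        a \<otimes> b = a \<otimes> c \<longrightarrow> b = c" using G unfolding garside_monoid_def by (elim conjE)
  then show "a \<in> carrier M \<Longrightarrow> b \<in> carrier M \<Longrightarrow> c \<in> carrier M \<Longrightarrow> a \<otimes> b = a \<otimes> c \<Longrightarrow> b = c" by blast
qed

lemma nu: "a \<in> carrier M \<Longrightarrow> b \<in> carrier M \<Longrightarrow> a \<otimes> b = \<one> \<Longrightarrow> a = \<one>"
  using G unfolding garside_monoid_def by blast

lemma lcm_ex:
  assumes "b \<in> carrier M" "c \<in> carrier M"
  shows "\<exists>m\<in>carrier M. \<exists>u\<in>carrier M. \<exists>v\<in>carrier M. m = u \<otimes> b \<and> m = v \<otimes> c \<and>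
     (\<forall>x\<in>carrier M. rdiv M b x \<and> rdiv M c x \<longrightarrow> rdiv M m x)"
proof -
  have "div_lattice (carrier M) (rdiv M)" using G unfolding garside_monoid_def by (elim conjE)
  note D = this[unfolded div_lattice_def, rule_format, OF assms]
  from D[THEN conjunct1] obtain m where m: "m \<in> carrier M" "rdiv M b m" "rdiv M c m"
     "\<forall>x\<in>carrier M. rdiv M b x \<and> rdiv M c x \<longrightarrow> rdiv M m x" by blast
  from m(2,3) obtain u v where "u \<in> carrier M" "v \<in> carrier M" "u \<otimes> b = m" "v \<otimes> c = m"
    unfolding rdiv_def by auto
  then show ?thesis using m(1,4) by (intro bexI[of _ m] bexI[of _ u] bexI[of _ v] conjI) auto
qed

lemma gcd_ex:
  assumes "a \<in> carrier M" "b \<in> carrier M"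
  shows "\<exists>g\<in>carrier M. \<exists>a'\<in>carrier M. \<exists>b'\<in>carrier M. a = g \<otimes> a' \<and> b = g \<otimes> b' \<and>
     (\<forall>x\<in>carrier M. ldiv M x a \<and> ldiv M x b \<longrightarrow> ldiv M x g)"
proof -
  have "div_lattice (carrier M) (ldiv M)" using G unfolding garside_monoid_def by (elim conjE)
  note D = this[unfolded div_lattice_def, rule_format, OF assms]
  from D[THEN conjunct2] obtain g where g: "g \<in> carrier M" "ldiv M g a" "ldiv M g b"
     "\<forall>x\<in>carrier M. ldiv M x a \<and> ldiv M x b \<longrightarrow> ldiv M x g" by blast
  from g(2,3) obtain a' b' where "a' \<in> carrier M" "b' \<in> carrier M" "g \<otimes> a' = a" "g \<otimes> b' = b"
    unfolding ldiv_def by auto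
  then show ?thesis using g(1,4) by (intro bexI[of _ g] bexI[of _ a'] bexI[of _ b'] conjI) auto
qed

lemma rho_Some: "rho M a y = Some x \<longleftrightarrow> y \<in> carrier M \<and> x = y \<otimes> a"
  unfolding rho_def by auto

lemma rho_pinj: "pinj (rho M a)" if "a \<in> carrier M"
  unfolding pinj_def rho_Some using rc[OF that] by blast

lemma br_Some:
  assumes "a \<in> carrier M"
  shows "br M a b x = Some z \<longleftrightarrow> (\<exists>y\<in>carrier M. x = y \<otimes> a \<and> z = y \<otimes> b)"
  unfolding br_def map_comp_Some_iff pinv_Some[OF rho_pinj[OF assms]] rho_Some by blast

lemma br_pinj:
  assumes "a \<in> carrier M" "b \<in> carrier M"
  shows "pinj (br M a b)"
  unfolding pinj_def br_Some[OF assms(1)]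
proof (intro allI impI)
  fix x x' z
  assume "\<exists>y\<in>carrier M. x = y \<otimes> a \<and> z = y \<otimes> b" "\<exists>y\<in>carrier M. x' = y \<otimes> a \<and> z = y \<otimes> b"
  then obtain y y' where "y \<in> carrier M" "y' \<in> carrier M" "x = y \<otimes> a" "z = y \<otimes> b"
    "x' = y' \<otimes> a" "z = y' \<otimes> b" by blast
  then show "x = x'" using rc[OF assms(2), of y y'] by simp
qed

lemma br_in: "a \<in> carrier M \<Longrightarrow> b \<in> carrier M \<Longrightarrow> br M a b \<in> IH_set M"
  unfolding br_def by (intro IH_comp IH_inv IH_gen)

lemma idmap_br: "idmap M = br M \<one> \<one>"
  by (rule map_eqI) (auto simp: br_Some idmap_def)

lemma rho_br: "a \<in> carrier M \<Longrightarrow> rho M a = br M \<one> a"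
  by (rule map_eqI) (auto simp: br_Some rho_def)

lemma pinv_br:
  assumes "a \<in> carrier M" "b \<in> carrier M"
  shows "pinv (br M a b) = br M b a"
  by (rule map_eqI) (auto simp: br_Some assms pinv_Some[OF br_pinj[OF assms]])

lemma comp_br:
  assumes ab: "a \<in> carrier M" "b \<in> carrier M" "c \<in> carrier M" "d \<in> carrier M"
    and uv: "u \<in> carrier M" "v \<in> carrier M" "m = u \<otimes> b" "m = v \<otimes> c"
    and L: "\<forall>x\<in>carrier M. rdiv M b x \<and> rdiv M c x \<longrightarrow> rdiv M m x"
  shows "br M c d \<circ>\<^sub>m br M a b = br M (u \<otimes> a) (v \<otimes> d)"
proof (rule map_eqI)
  fix x z
  have ua: "u \<otimes> a \<in> carrier M" using uv ab by simp
  show "(br M c d \<circ>\<^sub>m br M a b) x = Some z \<longleftrightarrow> br M (u \<otimes> a) (v \<otimes> d) x = Some z"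
  proof
    assume "(br M c d \<circ>\<^sub>m br M a b) x = Some z"
    then obtain w where w: "br M a b x = Some w" "br M c d w = Some z"
      unfolding map_comp_Some_iff by blast
    from w(1) obtain y where y: "y \<in> carrier M" "x = y \<otimes> a" "w = y \<otimes> b"
      unfolding br_Some[OF ab(1)] by blast
    from w(2) obtain y' where y': "y' \<in> carrier M" "w = y' \<otimes> c" "z = y' \<otimes> d"
      unfolding br_Some[OF ab(3)] by blast
    have yb: "y \<otimes> b \<in> carrier M" using y ab by simp
    have "rdiv M b (y \<otimes> b)" unfolding rdiv_def using y(1) by blast
    moreover have "rdiv M c (y \<otimes> b)" unfolding rdiv_def using y'(1) y(3) y'(2) by metis
    ultimately have "rdiv M m (y \<otimes> b)" using L yb by blast
    then obtain t where t: "t \<in> carrier M" "t \<otimes> m = y \<otimes> b" unfolding rdiv_def by blast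
    have "(t \<otimes> u) \<otimes> b = y \<otimes> b" using t uv ab by (simp add: m_assoc)
    then have tu: "t \<otimes> u = y" using rc[OF ab(2), of "t \<otimes> u" y] t uv y by simp
    have "(t \<otimes> v) \<otimes> c = y' \<otimes> c" using t uv ab y y' by (simp add: m_assoc)
    then have tv: "t \<otimes> v = y'" using rc[OF ab(3), of "t \<otimes> v" y'] t uv y' by simp
    have "x = (t \<otimes> u) \<otimes> a" using y(2) tu by simp
    then have "x = t \<otimes> (u \<otimes> a)" using t uv ab by (simp add: m_assoc)
    moreover have "z = (t \<otimes> v) \<otimes> d" using y'(3) tv by simp
    then have "z = t \<otimes> (v \<otimes> d)" using t uv ab by (simp add: m_assoc)
    ultimately show "br M (u \<otimes> a) (v \<otimes> d) x = Some z"
      unfolding br_Some[OF ua] using t(1) by blast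
  next
    assume "br M (u \<otimes> a) (v \<otimes> d) x = Some z"
    then obtain t where t: "t \<in> carrier M" "x = t \<otimes> (u \<otimes> a)" "z = t \<otimes> (v \<otimes> d)"
      unfolding br_Some[OF ua] by blast
    have tu: "t \<otimes> u \<in> carrier M" "t \<otimes> v \<in> carrier M" using t uv by simp_all
    have e: "(t \<otimes> u) \<otimes> b = (t \<otimes> v) \<otimes> c" using uv t ab by (simp add: m_assoc)
    have x: "x = (t \<otimes> u) \<otimes> a" using t uv ab by (simp add: m_assoc)
    have z: "z = (t \<otimes> v) \<otimes> d" using t uv ab by (simp add: m_assoc)
    have "br M a b x = Some ((t \<otimes> u) \<otimes> b)"
      unfolding br_Some[OF ab(1)] using tu x by blast
    moreover have "br M c d ((t \<otimes> u) \<otimes> b) = Some z"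
      unfolding br_Some[OF ab(3)] e using tu z by blast
    ultimately show "(br M c d \<circ>\<^sub>m br M a b) x = Some z" by (simp add: map_comp_Some_iff)
  qed
qed

lemma IH_br: "f \<in> IH_set M \<Longrightarrow> \<exists>a\<in>carrier M. \<exists>b\<in>carrier M. f = br M a b"
proof (induction rule: IH_set.induct)
  case IH_one then show ?case using idmap_br by auto
next
  case (IH_gen a) then show ?case using rho_br by auto
next
  case (IH_inv f) then show ?case using pinv_br by auto
next
  case (IH_comp f g)
  then obtain a b c d where abcd: "a \<in> carrier M" "b \<in> carrier M" "c \<in> carrier M" "d \<in> carrier M"
    "f = br M a b" "g = br M c d" by blast
  obtain m u v where "m \<in> carrier M" "u \<in> carrier M" "v \<in> carrier M" "m = u \<otimes> b" "m = v \<otimes> c"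
     "\<forall>x\<in>carrier M. rdiv M b x \<and> rdiv M c x \<longrightarrow> rdiv M m x"
    using lcm_ex[OF abcd(2,3)] by blast
  then show ?case using comp_br[of a b c d u v m] abcd by auto
qed

lemma chain: 
  assumes "a \<in> carrier M" "b \<in> carrier M" "d \<in> carrier M"
  shows "br M b d \<circ>\<^sub>m br M a b = br M a d"
proof -
  have "\<forall>x\<in>carrier M. rdiv M b x \<and> rdiv M b x \<longrightarrow> rdiv M b x" by blast
  from comp_br[OF assms(1,2,2,3) one_closed one_closed _ _ this] assms
  show ?thesis by simp
qed

lemma restr:
  assumes "c \<in> carrier M" "d \<in> carrier M" "u \<in> carrier M"
  shows "br M c d \<circ>\<^sub>m br M (u \<otimes> c) (u \<otimes> c) = br M (u \<otimes> c) (u \<otimes> d)"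
proof -
  have uc: "u \<otimes> c \<in> carrier M" using assms by simp
  have "\<forall>x\<in>carrier M. rdiv M (u \<otimes> c) x \<and> rdiv M c x \<longrightarrow> rdiv M (u \<otimes> c) x" by blast
  from comp_br[OF uc uc assms(1,2) one_closed assms(3) _ _ this] assms uc
  show ?thesis by simp
qed

lemma IH_pinj: "f \<in> IH_set M \<Longrightarrow> pinj f"
  using IH_br br_pinj by blast

lemma br_dom: "a \<in> carrier M \<Longrightarrow> b \<in> carrier M \<Longrightarrow> br M a b x = Some z \<Longrightarrow> x \<in> carrier M \<and> z \<in> carrier M"
  unfolding br_Some by auto

lemma br_idl: assumes "a \<in> carrier M" "b \<in> carrier M"
  shows "br M a b \<circ>\<^sub>m idmap M = br M a b"
proof (rule map_eqI)
  fix x z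
  show "(br M a b \<circ>\<^sub>m idmap M) x = Some z \<longleftrightarrow> br M a b x = Some z"
    unfolding map_comp_Some_iff idmap_def using br_dom[OF assms, of x z] by auto
qed

lemma br_idr: assumes "a \<in> carrier M" "b \<in> carrier M"
  shows "idmap M \<circ>\<^sub>m br M a b = br M a b"
proof (rule map_eqI)
  fix x z
  show "(idmap M \<circ>\<^sub>m br M a b) x = Some z \<longleftrightarrow> br M a b x = Some z"
    unfolding map_comp_Some_iff idmap_def using br_dom[OF assms, of x z] by auto
qed

lemma IH_simps: "carrier (IH M) = IH_set M" "mult (IH M) f g = g \<circ>\<^sub>m f" "one (IH M) = idmap M"
  by (simp_all add: IH_def)

lemma mon_IH: "monoid (IH M)"
proof (rule monoidI)
  fix x y z
  show "x \<in> carrier (IH M) \<Longrightarrow> y \<in> carrier (IH M) \<Longrightarrow> x \<otimes>\<^bsub>IH M\<^esub> y \<in> carrier (IH M)"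
    unfolding IH_simps by (rule IH_comp)
  show "\<one>\<^bsub>IH M\<^esub> \<in> carrier (IH M)" unfolding IH_simps by (rule IH_one)
  show "(x \<otimes>\<^bsub>IH M\<^esub> y) \<otimes>\<^bsub>IH M\<^esub> z = x \<otimes>\<^bsub>IH M\<^esub> (y \<otimes>\<^bsub>IH M\<^esub> z)"
    unfolding IH_simps by (simp add: mcomp_assoc)
next
  fix x assume "x \<in> carrier (IH M)"
  then obtain a b where ab: "a \<in> carrier M" "b \<in> carrier M" "x = br M a b"
    unfolding IH_simps using IH_br by blast
  show "\<one>\<^bsub>IH M\<^esub> \<otimes>\<^bsub>IH M\<^esub> x = x" unfolding IH_simps ab(3) using br_idl[OF ab(1,2)] .
  show "x \<otimes>\<^bsub>IH M\<^esub> \<one>\<^bsub>IH M\<^esub> = x" unfolding IH_simps ab(3) using br_idr[OF ab(1,2)] .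
qed

lemma inv_IH: "inverse_monoid (IH M)"
  unfolding inverse_monoid_def
proof (intro conjI mon_IH ballI)
  fix f assume "f \<in> carrier (IH M)"
  then obtain a b where ab: "a \<in> carrier M" "b \<in> carrier M" "f = br M a b"
    unfolding IH_simps using IH_br by blast
  have pf: "pinj f" using ab br_pinj by simp
  have e1: "f \<circ>\<^sub>m (br M b a \<circ>\<^sub>m f) = f" unfolding ab(3) using chain ab by simp
  have e2: "br M b a \<circ>\<^sub>m (f \<circ>\<^sub>m br M b a) = br M b a" unfolding ab(3) using chain ab by simp
  show "\<exists>!g. g \<in> carrier (IH M) \<and> f \<otimes>\<^bsub>IH M\<^esub> g \<otimes>\<^bsub>IH M\<^esub> f = f \<and>
              g \<otimes>\<^bsub>IH M\<^esub> f \<otimes>\<^bsub>IH M\<^esub> g = g"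
    unfolding IH_simps
  proof (rule ex1I[of _ "br M b a"])
    show "br M b a \<in> IH_set M \<and> f \<circ>\<^sub>m (br M b a \<circ>\<^sub>m f) = f \<and> br M b a \<circ>\<^sub>m (f \<circ>\<^sub>m br M b a) = br M b a"
      using e1 e2 br_in ab by simp
  next
    fix g assume g: "g \<in> IH_set M \<and> f \<circ>\<^sub>m (g \<circ>\<^sub>m f) = f \<and> g \<circ>\<^sub>m (f \<circ>\<^sub>m g) = g"
    have pg: "pinj g" using g IH_pinj by blast
    have pb: "pinj (br M b a)" using br_pinj ab by simp
    show "g = br M b a"
    proof (rule map_eqI)
      fix x z
      show "g x = Some z \<longleftrightarrow> br M b a x = Some z"
        using inv_unique_char[OF pf pg, of x z] inv_unique_char[OF pf pb e1 e2, of x z] g by simp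
    qed
  qed
qed

lemma imgL:
  assumes "a \<in> carrier M" "b \<in> carrier M" "c \<in> carrier M"
  shows "(\<lambda>x. br M a b \<circ>\<^sub>m x) ` IH_set M \<subseteq> (\<lambda>x. br M c b \<circ>\<^sub>m x) ` IH_set M"
proof
  fix y assume "y \<in> (\<lambda>x. br M a b \<circ>\<^sub>m x) ` IH_set M"
  then obtain x where x: "x \<in> IH_set M" "y = br M a b \<circ>\<^sub>m x" by blast
  have "y = br M c b \<circ>\<^sub>m (br M a c \<circ>\<^sub>m x)"
    using x chain[of a c b] assms by (simp add: mcomp_assoc[symmetric])
  moreover have "br M a c \<circ>\<^sub>m x \<in> IH_set M" using x br_in assms by (simp add: IH_comp)
  ultimately show "y \<in> (\<lambda>x. br M c b \<circ>\<^sub>m x) ` IH_set M" by blast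
qed

lemma imgR:
  assumes "c \<in> carrier M" "b \<in> carrier M" "d \<in> carrier M"
  shows "(\<lambda>x. x \<circ>\<^sub>m br M c b) ` IH_set M \<subseteq> (\<lambda>x. x \<circ>\<^sub>m br M c d) ` IH_set M"
proof
  fix y assume "y \<in> (\<lambda>x. x \<circ>\<^sub>m br M c b) ` IH_set M"
  then obtain x where x: "x \<in> IH_set M" "y = x \<circ>\<^sub>m br M c b" by blast
  have "y = (x \<circ>\<^sub>m br M d b) \<circ>\<^sub>m br M c d"
    using x chain[of c d b] assms by (simp add: mcomp_assoc)
  moreover have "x \<circ>\<^sub>m br M d b \<in> IH_set M" using x br_in assms by (simp add: IH_comp)
  ultimately show "y \<in> (\<lambda>x. x \<circ>\<^sub>m br M c d) ` IH_set M" by blast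
qed

lemma bis_IH: "bisimple (IH M)"
  unfolding bisimple_def
proof (intro conjI inv_IH ballI)
  fix f g assume "f \<in> carrier (IH M)" "g \<in> carrier (IH M)"
  then obtain a b c d where ab: "a \<in> carrier M" "b \<in> carrier M" "f = br M a b"
    and cd: "c \<in> carrier M" "d \<in> carrier M" "g = br M c d"
    unfolding IH_simps using IH_br by metis
  have "green_L (IH M) f (br M c b)"
    unfolding green_L_def IH_simps ab(3) using imgL[of a b c] imgL[of c b a] ab cd by blast
  moreover have "green_R (IH M) (br M c b) g"
    unfolding green_R_def IH_simps cd(3) using imgR[of c b d] imgR[of c d b] ab cd by blast
  moreover have "br M c b \<in> carrier (IH M)" unfolding IH_simps using br_in ab cd by simp
  ultimately show "green_D (IH M) f g" unfolding green_D_def by blast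
qed

lemma nat_le_IH: "nat_le (IH M) f g \<longleftrightarrow> (\<exists>e\<in>IH_set M. e \<circ>\<^sub>m e = e \<and> f = g \<circ>\<^sub>m e)"
  unfolding nat_le_def IH_simps ..

lemma above:
  assumes pq: "p \<in> carrier M" "q \<in> carrier M" "c \<in> carrier M" "d \<in> carrier M"
    and e: "e \<in> IH_set M" "e \<circ>\<^sub>m e = e" and eq: "br M p q = br M c d \<circ>\<^sub>m e"
  shows "\<exists>u\<in>carrier M. p = u \<otimes> c \<and> q = u \<otimes> d"
proof -
  have "br M p q p = Some q" unfolding br_Some[OF pq(1)] using pq
    by (intro bexI[of _ \<one>]) simp_all
  then have "(br M c d \<circ>\<^sub>m e) p = Some q" using eq by simp
  then obtain z where z: "e p = Some z" "br M c d z = Some q" unfolding map_comp_Some_iff by blast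
  have "(e \<circ>\<^sub>m e) p = Some z" using e(2) z(1) by simp
  then obtain k where "e p = Some k" "e k = Some z" unfolding map_comp_Some_iff by blast
  then have "e z = Some z" using z(1) by simp
  then have "p = z" using IH_pinj[OF e(1)] z(1) unfolding pinj_def by blast
  then show ?thesis using z(2) unfolding br_Some[OF pq(3)] by blast
qed

definition cp :: "'a \<Rightarrow> 'a \<Rightarrow> bool" where
  "cp c d \<longleftrightarrow> (\<forall>w\<in>carrier M. ldiv M w c \<and> ldiv M w d \<longrightarrow> w = \<one>)"

lemma idem_br: "a \<in> carrier M \<Longrightarrow> br M a a \<circ>\<^sub>m br M a a = br M a a"
  using chain by simp

lemma max_of_cp:
  assumes cd: "c \<in> carrier M" "d \<in> carrier M" "cp c d"
  shows "nat_maximal (IH M) (br M c d)"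
  unfolding nat_maximal_def
proof (intro conjI ballI impI)
  show "br M c d \<in> carrier (IH M)" unfolding IH_simps using br_in cd by simp
next
  fix x assume x: "x \<in> carrier (IH M)" "nat_le (IH M) (br M c d) x"
  then obtain c' d' where c'd': "c' \<in> carrier M" "d' \<in> carrier M" "x = br M c' d'"
    unfolding IH_simps using IH_br by blast
  from x(2) obtain e where e: "e \<in> IH_set M" "e \<circ>\<^sub>m e = e" "br M c d = br M c' d' \<circ>\<^sub>m e"
    unfolding nat_le_IH c'd'(3) by blast
  obtain u where u: "u \<in> carrier M" "c = u \<otimes> c'" "d = u \<otimes> d'"
    using above[OF cd(1,2) c'd'(1,2) e] by blast
  have "ldiv M u c" "ldiv M u d" unfolding ldiv_def using u c'd' by auto
  then have "u = \<one>" using cd(3) u(1) unfolding cp_def by blast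
  then show "x = br M c d" using u c'd' by simp
qed

lemma cp_of_max:
  assumes cd: "c \<in> carrier M" "d \<in> carrier M" "nat_maximal (IH M) (br M c d)"
  shows "cp c d"
  unfolding cp_def
proof (intro ballI impI)
  fix w assume w: "w \<in> carrier M" "ldiv M w c \<and> ldiv M w d"
  then obtain c'' d'' where cd'': "c'' \<in> carrier M" "d'' \<in> carrier M" "c = w \<otimes> c''" "d = w \<otimes> d''"
    unfolding ldiv_def by metis
  have "br M c d = br M c'' d'' \<circ>\<^sub>m br M c c"
    using restr[OF cd''(1,2) w(1)] cd'' by simp
  then have "nat_le (IH M) (br M c d) (br M c'' d'')"
    unfolding nat_le_IH using br_in[OF cd(1) cd(1)] idem_br[OF cd(1)] by blast
  moreover have "br M c'' d'' \<in> carrier (IH M)" unfolding IH_simps using br_in cd'' by simp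
  ultimately have eq: "br M c'' d'' = br M c d" using cd(3) unfolding nat_maximal_def by blast
  have "br M c'' d'' c'' = Some d''" unfolding br_Some[OF cd''(1)] using cd''
    by (intro bexI[of _ \<one>]) simp_all
  then have "br M c d c'' = Some d''" using eq by simp
  then obtain y where y: "y \<in> carrier M" "c'' = y \<otimes> c" unfolding br_Some[OF cd(1)] by blast
  then have "\<one> \<otimes> c'' = (y \<otimes> w) \<otimes> c''" using cd'' w by (simp add: m_assoc)
  then have "y \<otimes> w = \<one>" using rc[OF cd''(1), of \<one> "y \<otimes> w"] y w by simp
  moreover then have "y = \<one>" using nu y w by blast
  ultimately show "w = \<one>" using w by simp
qed

lemma Finv_IH: "F_inverse (IH M)"
  unfolding F_inverse_def
proof (intro conjI inv_IH ballI)
  fix f assume "f \<in> carrier (IH M)"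
  then obtain a b where ab: "a \<in> carrier M" "b \<in> carrier M" "f = br M a b"
    unfolding IH_simps using IH_br by blast
  obtain g a' b' where g: "g \<in> carrier M" "a' \<in> carrier M" "b' \<in> carrier M" "a = g \<otimes> a'" "b = g \<otimes> b'"
    "\<forall>x\<in>carrier M. ldiv M x a \<and> ldiv M x b \<longrightarrow> ldiv M x g"
    using gcd_ex[OF ab(1,2)] by blast
  have cpab: "cp a' b'" unfolding cp_def
  proof (intro ballI impI)
    fix w assume w: "w \<in> carrier M" "ldiv M w a' \<and> ldiv M w b'"
    then obtain s s' where s: "s \<in> carrier M" "s' \<in> carrier M" "a' = w \<otimes> s" "b' = w \<otimes> s'"
      unfolding ldiv_def by metis
    have "ldiv M (g \<otimes> w) a" unfolding ldiv_def
      using s g w by (intro bexI[of _ s]) (simp_all add: m_assoc)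
    moreover have "ldiv M (g \<otimes> w) b" unfolding ldiv_def
      using s g w by (intro bexI[of _ s']) (simp_all add: m_assoc)
    ultimately have "ldiv M (g \<otimes> w) g" using g(6) g(1) w(1) by simp
    then obtain t where t: "t \<in> carrier M" "(g \<otimes> w) \<otimes> t = g" unfolding ldiv_def by blast
    then have "g \<otimes> (w \<otimes> t) = g \<otimes> \<one>" using g w by (simp add: m_assoc)
    then have "w \<otimes> t = \<one>" using lc[OF g(1), of "w \<otimes> t" \<one>] t w by simp
    then show "w = \<one>" using nu t w by blast
  qed
  have mx: "nat_maximal (IH M) (br M a' b')" using max_of_cp[OF g(2,3) cpab] .
  have le: "nat_le (IH M) f (br M a' b')"
  proof -
    have "f = br M a' b' \<circ>\<^sub>m br M a a" using restr[OF g(2,3,1)] ab g by simp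
    then show ?thesis unfolding nat_le_IH using br_in[OF ab(1) ab(1)] idem_br[OF ab(1)] by blast
  qed
  show "\<exists>!m. nat_maximal (IH M) m \<and> nat_le (IH M) f m"
  proof (rule ex1I[of _ "br M a' b'"])
    show "nat_maximal (IH M) (br M a' b') \<and> nat_le (IH M) f (br M a' b')" using mx le by simp
  next
    fix m assume m: "nat_maximal (IH M) m \<and> nat_le (IH M) f m"
    then have "m \<in> IH_set M" unfolding nat_maximal_def IH_simps by blast
    then obtain c d where cd: "c \<in> carrier M" "d \<in> carrier M" "m = br M c d" using IH_br by blast
    have cpcd: "cp c d" using cp_of_max[OF cd(1,2)] m cd(3) by simp
    from m obtain e where e: "e \<in> IH_set M" "e \<circ>\<^sub>m e = e" "br M a b = br M c d \<circ>\<^sub>m e"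
      unfolding nat_le_IH cd(3) ab(3) by blast
    obtain u where u: "u \<in> carrier M" "a = u \<otimes> c" "b = u \<otimes> d"
      using above[OF ab(1,2) cd(1,2) e] by blast
    have "ldiv M u a" "ldiv M u b" unfolding ldiv_def using u cd by auto
    then have "ldiv M u g" using g(6) u(1) by simp
    then obtain t where t: "t \<in> carrier M" "u \<otimes> t = g" unfolding ldiv_def by blast
    have "u \<otimes> c = u \<otimes> (t \<otimes> a')" using u g t by (simp add: m_assoc[symmetric])
    then have c: "c = t \<otimes> a'" using lc[OF u(1)] cd t g by simp
    have "u \<otimes> d = u \<otimes> (t \<otimes> b')" using u g t by (simp add: m_assoc[symmetric])
    then have d: "d = t \<otimes> b'" using lc[OF u(1)] cd t g by simp
    have "ldiv M t c" "ldiv M t d" unfolding ldiv_def using c d g by auto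
    then have "t = \<one>" using cpcd t(1) unfolding cp_def by blast
    then show "m = br M a' b'" using cd c d g by simp
  qed
qed

end

theorem corollary4p4:
  fixes M :: "('a, 'b) monoid_scheme"
  assumes "garside_monoid M"
  shows "inverse_monoid (IH M) \<and> bisimple (IH M) \<and> F_inverse (IH M)"
proof -
  interpret garside M by (rule garside.intro) (rule assms)
  show ?thesis using inv_IH bis_IH Finv_IH by blast
qed

end
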